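(* Consider a random quantum circuit on $N$ sites of local dimension $q$ consisting of independent gates, each a Haar-random unitary on its support. Fix an order $t$. Let $\Psi$ be the moment operator corresponding to the last gate and $\Phi'$ that of the rest of the circuit, so that $\Phi=\Psi\circ\Phi'$ is the moment operator of the full circuit. Let $s$ be the largest singular value of $\Phi-\Phi_H$, let $\epsilon_A=\|\Phi-\Phi_H\|_\diamond$, and let $\epsilon_M$ be the smallest number such that $\epsilon_M\Phi_H\pm(\Phi-\Phi_H)$ are both completely positive; define $s',\epsilon_A',\epsilon_M'$ analogously with $\Phi'$ in place of $\Phi$. Then $$s\le s',\qquad \epsilon_A\le\epsilon_A',\qquad \epsilon_M\le\epsilon_M'.$$
   Context: For a probability distribution $\nu$ on unitaries on $\mathcal{H}=(\mathbb{C}^q)^{\otimes N}$, its order-$t$ moment operator is the channel $X\mapsto\mathbb{E}_{U\sim\nu}\left[U^{\otimes t}X(U^\dagger)^{\otimes t}\right]$ on operators on $\mathcal{H}^{\otimes t}$. A gate Haar-random on a subset $S$ of sites means $V\otimes I$ with $V$ Haar-distributed on the unitary group of the sites in $S$. $\Phi_H$ denotes the moment operator of the Haar measure on the full unitary group of $\mathcal{H}$. $\|\cdot\|_\diamond$ is the diamond norm; singular values are those of the superoperator viewed as a linear map on the Hilbert–Schmidt space. *)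

theory Defs
  imports "HOL-Analysis.Analysis" "HOL-Probability.Probability"
begin

definition adj :: "complex^'i^'j \<Rightarrow> complex^'j^'i" where
  "adj A = (\<chi> i j. cnj (A $ j $ i))"

definition unitary :: "complex^'i::finite^'i \<Rightarrow> bool" where
  "unitary U \<longleftrightarrow> adj U ** U = mat 1 \<and> U ** adj U = mat 1"

definition unitary_group :: "(complex^'i^'i) set" where
  "unitary_group = {U. unitary U}"

definition mtrace :: "complex^'i^'i \<Rightarrow> complex" where
  "mtrace A = (\<Sum>i\<in>UNIV. A $ i $ i)"

definition psd :: "complex^'i^'i \<Rightarrow> bool" where
  "psd A \<longleftrightarrow> (\<forall>v :: complex^'i.
      Im (\<Sum>i\<in>UNIV. \<Sum>j\<in>UNIV. cnj (v $ i) * A $ i $ j * v $ j) = 0 \<and>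
      Re (\<Sum>i\<in>UNIV. \<Sum>j\<in>UNIV. cnj (v $ i) * A $ i $ j * v $ j) \<ge> 0)"

definition trace_norm :: "complex^'i^'i \<Rightarrow> real" where
  "trace_norm X = Sup {cmod (mtrace (W ** X)) | W. unitary W}"

text \<open>Sites: finite type 'n (N = CARD('n)); local levels: finite type 'q (q = CARD('q)).
  Computational basis of H = (C^q)^{\<otimes>N}: configurations 'n \<Rightarrow> 'q.
  A gate supported on S is V \<otimes> I, V a unitary on the sites in S.\<close>
definition gate_group :: "'n::finite set \<Rightarrow> (complex^('n \<Rightarrow> 'q::finite)^('n \<Rightarrow> 'q)) set" where
  "gate_group S = {U. unitary U \<and>
     (\<exists>V :: ('n \<Rightarrow> 'q) \<Rightarrow> ('n \<Rightarrow> 'q) \<Rightarrow> complex.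
        \<forall>x y. U $ x $ y =
          (if (\<forall>i. i \<notin> S \<longrightarrow> x i = y i) then V (restrict x S) (restrict y S) else 0))}"

definition haar_on :: "(complex^'i^'i) set \<Rightarrow> (complex^'i^'i) measure \<Rightarrow> bool" where
  "haar_on G \<mu> \<longleftrightarrow> prob_space \<mu> \<and> sets \<mu> = sets borel \<and> emeasure \<mu> G = 1 \<and>
     (\<forall>g\<in>G. distr \<mu> borel (\<lambda>U. g ** U) = \<mu>)"

definition tpow :: "complex^'i::finite^'i \<Rightarrow> complex^('t::finite \<Rightarrow> 'i)^('t \<Rightarrow> 'i)" where
  "tpow U = (\<chi> a b. \<Prod>k\<in>UNIV. U $ a k $ b k)"

text \<open>Order-t moment operator, t = CARD('t).\<close>
definition moment :: "(complex^'i^'i) measure \<Rightarrow>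
    complex^('t::finite \<Rightarrow> 'i::finite)^('t \<Rightarrow> 'i) \<Rightarrow> complex^('t \<Rightarrow> 'i)^('t \<Rightarrow> 'i)" where
  "moment \<nu> X = (\<integral>U. (tpow U ** X ** adj (tpow U)) \<partial>\<nu>)"

text \<open>Moment operator of a circuit of independent gates, listed in the order in which
  they are applied (first gate first): the composition of the gate moment operators.\<close>
fun circuit_moment :: "(complex^'i^'i) measure list \<Rightarrow>
    (complex^('t::finite \<Rightarrow> 'i::finite)^('t \<Rightarrow> 'i) \<Rightarrow> complex^('t \<Rightarrow> 'i)^('t \<Rightarrow> 'i))" where
  "circuit_moment [] = id"
| "circuit_moment (\<nu> # \<nu>s) = circuit_moment \<nu>s \<circ> moment \<nu>"

text \<open>L \<otimes> id on an ancilla of the same dimension as the input space.\<close>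
definition tensor_id :: "(complex^'c^'c \<Rightarrow> complex^'c^'c) \<Rightarrow>
    complex^('c \<times> 'c)^('c \<times> 'c) \<Rightarrow> complex^('c \<times> 'c)^('c \<times> 'c)" where
  "tensor_id L Y = (\<chi> p r. L (\<chi> a b. Y $ (a, snd p) $ (b, snd r)) $ fst p $ fst r)"

definition positive_map :: "(complex^'c^'c \<Rightarrow> complex^'d^'d) \<Rightarrow> bool" where
  "positive_map L \<longleftrightarrow> (\<forall>X. psd X \<longrightarrow> psd (L X))"

definition completely_positive :: "(complex^'c^'c \<Rightarrow> complex^'c^'c) \<Rightarrow> bool" where
  "completely_positive L \<longleftrightarrow> positive_map (tensor_id L)"

definition diamond_norm :: "(complex^'c^'c \<Rightarrow> complex^'c^'c) \<Rightarrow> real" where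
  "diamond_norm L = Sup {trace_norm (tensor_id L Y) | Y. trace_norm Y \<le> 1}"

text \<open>Largest singular value of L as a linear map on the Hilbert--Schmidt space
  (the norm on complex^'c^'c is the Frobenius/Hilbert--Schmidt norm).\<close>
definition largest_singular_value :: "(complex^'c^'c \<Rightarrow> complex^'c^'c) \<Rightarrow> real" where
  "largest_singular_value L = onorm L"

text \<open>Smallest eps with eps*PhiH +- (Phi - PhiH) both completely positive (\<infinity> if none).\<close>
definition eps_M :: "(complex^'c^'c \<Rightarrow> complex^'c^'c) \<Rightarrow> (complex^'c^'c \<Rightarrow> complex^'c^'c) \<Rightarrow> ereal" where
  "eps_M \<Phi> \<Phi>H = Inf (ereal ` {\<epsilon>::real.
      completely_positive (\<lambda>X. \<epsilon> *\<^sub>R \<Phi>H X + (\<Phi> X - \<Phi>H X)) \<and>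
      completely_positive (\<lambda>X. \<epsilon> *\<^sub>R \<Phi>H X - (\<Phi> X - \<Phi>H X))})"

end

theory Submission
  imports Defs
begin


lemma adj_nth[simp]: "adj A $ i $ j = cnj (A $ j $ i)"
  by (simp add: adj_def)

lemma mmult_nth: "(A ** B) $ i $ j = (\<Sum>k\<in>UNIV. A $ i $ k * B $ k $ j)"
  by (simp add: matrix_matrix_mult_def)

lemma adj_adj[simp]: "adj (adj A) = A"
  by (simp add: vec_eq_iff)

lemma adj_mult: "adj (A ** B) = adj B ** adj (A :: complex^'a^'b::finite)"
  by (simp add: vec_eq_iff mmult_nth mult.commute)

lemma adj_mat1[simp]: "adj (mat 1 :: complex^'a::finite^'a) = mat 1"
  by (simp add: vec_eq_iff mat_def)

lemma unitary_adj: "unitary U \<Longrightarrow> unitary (adj U)"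
  by (simp add: unitary_def)

lemma unitary_mult: assumes "unitary U" "unitary V" shows "unitary (U ** V)"
proof -
  have "adj (U ** V) ** (U ** V) = adj V ** (adj U ** U) ** V"
    by (simp add: adj_mult matrix_mul_assoc)
  also have "\<dots> = mat 1" using assms by (simp add: unitary_def)
  finally have 1: "adj (U ** V) ** (U ** V) = mat 1" .
  have "(U ** V) ** adj (U ** V) = U ** (V ** adj V) ** adj U"
    by (simp add: adj_mult matrix_mul_assoc)
  also have "\<dots> = mat 1" using assms by (simp add: unitary_def)
  finally show ?thesis using 1 by (simp add: unitary_def)
qed

lemma unitary_mat1: "unitary (mat 1)"
  by (simp add: unitary_def)

lemma mtrace_comm: "mtrace (A ** B) = mtrace (B ** (A :: complex^'a::finite^'b::finite))"
  unfolding mtrace_def mmult_nth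
  by (subst sum.swap) (simp add: mult.commute)

lemma unitary_row_sum: assumes "unitary W"
  shows "(\<Sum>j\<in>UNIV. (cmod (W $ i $ j))\<^sup>2) = 1"
proof -
  have "(W ** adj W) $ i $ i = 1" using assms by (simp add: unitary_def mat_def)
  then have "(\<Sum>j\<in>UNIV. W $ i $ j * cnj (W $ i $ j)) = 1" by (simp add: mmult_nth)
  then have "(\<Sum>j\<in>UNIV. complex_of_real ((cmod (W $ i $ j))\<^sup>2)) = 1"
    by (simp add: complex_norm_square del: of_real_power)
  then have "complex_of_real (\<Sum>j\<in>UNIV. (cmod (W $ i $ j))\<^sup>2) = 1" by simp
  then show ?thesis using of_real_eq_1_iff by blast
qed

lemma unitary_entry_le: assumes "unitary W" shows "cmod (W $ i $ j) \<le> 1"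
proof -
  have "(cmod (W $ i $ j))\<^sup>2 \<le> (\<Sum>j\<in>UNIV. (cmod (W $ i $ j))\<^sup>2)"
    by (rule member_le_sum) auto
  then have "(cmod (W $ i $ j))\<^sup>2 \<le> 1" using unitary_row_sum[OF assms] by simp
  then show ?thesis using power2_le_imp_le[of "cmod (W $ i $ j)" 1] by simp
qed

lemma mtrace_bound: assumes "unitary W"
  shows "cmod (mtrace (W ** X)) \<le> (\<Sum>i\<in>UNIV. \<Sum>j\<in>UNIV. cmod (X $ i $ j))"
proof -
  have "cmod (mtrace (W ** X)) \<le> (\<Sum>i\<in>UNIV. \<Sum>j\<in>UNIV. cmod (W $ i $ j * X $ j $ i))"
    unfolding mtrace_def mmult_nth
    by (rule order_trans[OF norm_sum sum_mono[OF norm_sum]])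
  also have "\<dots> \<le> (\<Sum>i\<in>UNIV. \<Sum>j\<in>UNIV. cmod (X $ j $ i))"
    apply (intro sum_mono)
    apply (simp add: norm_mult)
    using unitary_entry_le[OF assms] by (simp add: mult_left_le_one_le)
  also have "\<dots> = (\<Sum>i\<in>UNIV. \<Sum>j\<in>UNIV. cmod (X $ i $ j))"
    by (rule sum.swap)
  finally show ?thesis .
qed

lemma tn_bdd: "bdd_above {cmod (mtrace (W ** X)) | W. unitary W}"
  unfolding bdd_above_def using mtrace_bound by blast

lemma tn_upper: "unitary W \<Longrightarrow> cmod (mtrace (W ** X)) \<le> trace_norm X"
  unfolding trace_norm_def by (rule cSup_upper[OF _ tn_bdd]) blast

lemma tn_ne: "{cmod (mtrace (W ** X)) | W. unitary W} \<noteq> {}"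
  using unitary_mat1 by blast

lemma trace_norm_le_sum: "trace_norm X \<le> (\<Sum>i\<in>UNIV. \<Sum>j\<in>UNIV. cmod (X $ i $ j))"
  unfolding trace_norm_def by (rule cSup_least[OF tn_ne]) (auto intro: mtrace_bound)

lemma trace_norm_least:
  assumes "\<And>W. unitary W \<Longrightarrow> cmod (mtrace (W ** X)) \<le> b"
  shows "trace_norm X \<le> b"
  unfolding trace_norm_def by (rule cSup_least[OF tn_ne]) (use assms in auto)



lemma vnorm_sq: "(norm (x :: 'a::real_normed_vector^'n::finite))^2 = (\<Sum>i\<in>UNIV. (norm (x$i))^2)"
  by (simp add: norm_vec_def L2_set_def sum_nonneg)

lemma norm_le_sumv: "norm (x :: 'a::real_normed_vector^'n::finite) \<le> (\<Sum>i\<in>UNIV. norm (x$i))"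
  by (simp add: norm_vec_def L2_set_le_sum)

lemma norm_sq_mtrace: "complex_of_real ((norm Z)^2) = mtrace (Z ** adj (Z :: complex^'a::finite^'b::finite))"
proof -
  have "(norm Z)^2 = (\<Sum>i\<in>UNIV. \<Sum>j\<in>UNIV. (cmod (Z$i$j))^2)"
    by (simp add: vnorm_sq)
  then have "complex_of_real ((norm Z)^2) = (\<Sum>i\<in>UNIV. \<Sum>j\<in>UNIV. complex_of_real ((cmod (Z$i$j))^2))"
    by simp
  also have "\<dots> = mtrace (Z ** adj Z)"
    unfolding mtrace_def mmult_nth by (simp add: complex_norm_square del: of_real_power)
  finally show ?thesis .
qed

lemma norm_conj: assumes "unitary A"
  shows "norm (A ** Z ** adj A) = norm (Z :: complex^'a::finite^'a)"
proof -
  have "(A ** Z ** adj A) ** adj (A ** Z ** adj A) = A ** ((Z ** adj Z) ** adj A)"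
  proof -
    have "(A ** Z ** adj A) ** adj (A ** Z ** adj A) = (A ** Z ** adj A) ** (A ** adj Z ** adj A)"
      by (simp add: adj_mult matrix_mul_assoc)
    also have "\<dots> = A ** Z ** (adj A ** A) ** adj Z ** adj A"
      by (simp only: matrix_mul_assoc)
    also have "\<dots> = A ** ((Z ** adj Z) ** adj A)" using assms
      by (simp add: unitary_def matrix_mul_assoc)
    finally show ?thesis .
  qed
  then have "mtrace ((A ** Z ** adj A) ** adj (A ** Z ** adj A)) = mtrace (((Z ** adj Z) ** adj A) ** A)"
    using mtrace_comm by metis
  also have "\<dots> = mtrace ((Z ** adj Z) ** (adj A ** A))"
    by (simp only: matrix_mul_assoc)
  also have "\<dots> = mtrace (Z ** adj Z)" using assms by (simp add: unitary_def)
  finally have "complex_of_real ((norm (A ** Z ** adj A))^2) = complex_of_real ((norm Z)^2)"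
    by (simp only: norm_sq_mtrace)
  then have "(norm (A ** Z ** adj A))^2 = (norm Z)^2" using of_real_eq_iff by blast
  then show ?thesis by (simp add: power2_eq_iff_nonneg)
qed

lemma tn_conj: assumes "unitary A" "unitary W"
  shows "cmod (mtrace (W ** (A ** Z ** adj A))) \<le> trace_norm (Z :: complex^'a::finite^'a)"
proof -
  have "mtrace (W ** (A ** Z ** adj A)) = mtrace ((W ** A ** Z) ** adj A)"
    by (simp only: matrix_mul_assoc)
  also have "\<dots> = mtrace (adj A ** (W ** A ** Z))"
    by (rule mtrace_comm)
  also have "\<dots> = mtrace ((adj A ** W ** A) ** Z)"
    by (simp only: matrix_mul_assoc)
  finally show ?thesis
    using tn_upper[OF unitary_mult[OF unitary_mult[OF unitary_adj[OF assms(1)] assms(2)] assms(1)]]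
    by simp
qed

definition sesq :: "complex^'a::finite \<Rightarrow> complex^'a \<Rightarrow> complex" where
  "sesq u x = (\<Sum>i\<in>UNIV. cnj (u$i) * x$i)"

lemma sesq_mv: "sesq u (A *v x) = sesq (adj A *v u) (x :: complex^'a::finite)"
  unfolding sesq_def matrix_vector_mult_def
  by (simp add: sum_distrib_left sum_distrib_right mult_ac, subst sum.swap, simp)

lemma qf_sesq: "(\<Sum>i\<in>UNIV. \<Sum>j\<in>UNIV. cnj (v $ i) * A $ i $ j * v $ j) = sesq v (A *v v)"
  unfolding sesq_def matrix_vector_mult_def by (simp add: sum_distrib_left mult_ac)

lemma psd_conj: assumes "psd Z" shows "psd (A ** Z ** adj (A :: complex^'a::finite^'a))"
  unfolding psd_def
proof
  fix v :: "complex^'a"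
  have "sesq v ((A ** Z ** adj A) *v v) = sesq (adj A *v v) (Z *v (adj A *v v))"
    by (simp add: matrix_vector_mul_assoc[symmetric] sesq_mv)
  then show "Im (\<Sum>i\<in>UNIV. \<Sum>j\<in>UNIV. cnj (v $ i) * (A ** Z ** adj A) $ i $ j * v $ j) = 0 \<and>
     0 \<le> Re (\<Sum>i\<in>UNIV. \<Sum>j\<in>UNIV. cnj (v $ i) * (A ** Z ** adj A) $ i $ j * v $ j)"
    using assms unfolding psd_def qf_sesq by metis
qed

definition tau :: "'a \<Rightarrow> 'a \<Rightarrow> 'a \<Rightarrow> 'a" where
  "tau i j k = (if k = i then j else if k = j then i else k)"

lemma tau_tau[simp]: "tau i j (tau i j k) = k"
  by (simp add: tau_def)

lemma tau_eq_iff[simp]: "(tau i j k = tau i j m) = (k = m)"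
  by (metis tau_tau)

definition Wsg :: "complex \<Rightarrow> 'a \<Rightarrow> 'a \<Rightarrow> complex^'a::finite^'a" where
  "Wsg s i j = (\<chi> k l. if l = tau i j k then (if k = j then s else 1) else 0)"

lemma unitary_Wsg: assumes "s * cnj s = 1" shows "unitary (Wsg s i j)"
proof -
  define d where "d k = (if k = j then s else (1::complex))" for k
  have W: "Wsg s i j $ k $ l = (if l = tau i j k then d k else 0)" for k l
    by (simp add: Wsg_def d_def)
  have dd: "d k * cnj (d k) = 1" "cnj (d k) * d k = 1" for k
    using assms by (auto simp: d_def mult.commute)
  have 1: "(\<Sum>l\<in>UNIV. Wsg s i j $ k $ l * cnj (Wsg s i j $ m $ l)) = (if k = m then 1 else 0)" for k m
  proof -
    have "(\<Sum>l\<in>UNIV. Wsg s i j $ k $ l * cnj (Wsg s i j $ m $ l))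
        = (\<Sum>l\<in>UNIV. if l = tau i j k then d k * cnj (Wsg s i j $ m $ l) else 0)"
      by (rule sum.cong) (simp_all add: W)
    also have "\<dots> = d k * cnj (Wsg s i j $ m $ tau i j k)"
      by simp
    also have "\<dots> = (if k = m then 1 else 0)"
      by (simp add: W dd)
    finally show ?thesis .
  qed
  have 2: "(\<Sum>l\<in>UNIV. cnj (Wsg s i j $ l $ k) * Wsg s i j $ l $ m) = (if k = m then 1 else 0)" for k m
  proof -
    have "(\<Sum>l\<in>UNIV. cnj (Wsg s i j $ l $ k) * Wsg s i j $ l $ m)
        = (\<Sum>l\<in>UNIV. if l = tau i j k then cnj (d l) * Wsg s i j $ l $ m else 0)"
      by (rule sum.cong) (auto simp add: W)
    also have "\<dots> = cnj (d (tau i j k)) * Wsg s i j $ tau i j k $ m"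
      by simp
    also have "\<dots> = (if k = m then 1 else 0)"
      by (simp add: W dd)
    finally show ?thesis .
  qed
  have a: "Wsg s i j ** adj (Wsg s i j) = mat 1"
  proof (rule vec_eq_iff[THEN iffD2], intro allI, rule vec_eq_iff[THEN iffD2], intro allI)
    fix k m show "(Wsg s i j ** adj (Wsg s i j)) $ k $ m = mat 1 $ k $ m"
      unfolding mmult_nth adj_nth mat_def vec_lambda_beta by (rule 1)
  qed
  have b: "adj (Wsg s i j) ** Wsg s i j = mat 1"
  proof (rule vec_eq_iff[THEN iffD2], intro allI, rule vec_eq_iff[THEN iffD2], intro allI)
    fix k m show "(adj (Wsg s i j) ** Wsg s i j) $ k $ m = mat 1 $ k $ m"
      unfolding mmult_nth adj_nth mat_def vec_lambda_beta by (rule 2)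
  qed
  show ?thesis unfolding unitary_def using a b by simp
qed

lemma mtrace_Wsg: "mtrace (Wsg s i j ** X) = s * X $ i $ j + (\<Sum>k\<in>UNIV - {j}. X $ tau i j k $ k)"
proof -
  have inner: "(\<Sum>l\<in>UNIV. Wsg s i j $ k $ l * X $ l $ k) = (if k = j then s else 1) * X $ tau i j k $ k" for k
  proof -
    have "(\<Sum>l\<in>UNIV. Wsg s i j $ k $ l * X $ l $ k)
       = (\<Sum>l\<in>UNIV. if l = tau i j k then (if k = j then s else 1) * X $ l $ k else 0)"
      by (rule sum.cong) (simp_all add: Wsg_def)
    also have "\<dots> = (if k = j then s else 1) * X $ tau i j k $ k" by simp
    finally show ?thesis .
  qed
  have "mtrace (Wsg s i j ** X) = (\<Sum>k\<in>UNIV. (if k = j then s else 1) * X $ tau i j k $ k)"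
    unfolding mtrace_def mmult_nth inner ..
  also have "\<dots> = (if j = j then s else 1) * X $ tau i j j $ j + (\<Sum>k\<in>UNIV - {j}. (if k = j then s else 1) * X $ tau i j k $ k)"
    by (rule sum.remove) auto
  also have "\<dots> = s * X $ i $ j + (\<Sum>k\<in>UNIV - {j}. X $ tau i j k $ k)"
    by (simp add: tau_def)
  finally show ?thesis .
qed

lemma entry_le_trace_norm: "cmod (X $ i $ j) \<le> trace_norm X"
proof -
  have "2 * X $ i $ j = mtrace (Wsg 1 i j ** X) - mtrace (Wsg (-1) i j ** X)"
    by (simp add: mtrace_Wsg)
  then have "2 * cmod (X $ i $ j) \<le> cmod (mtrace (Wsg 1 i j ** X)) + cmod (mtrace (Wsg (-1) i j ** X))"
    by (metis norm_mult norm_numeral norm_triangle_ineq4)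
  also have "\<dots> \<le> trace_norm X + trace_norm X"
    by (intro add_mono tn_upper unitary_Wsg) auto
  finally show ?thesis by simp
qed

lemma trace_norm_nonneg: "0 \<le> trace_norm X"
  using tn_upper[OF unitary_mat1, of X] norm_ge_zero order_trans by blast

lemma norm_le_trace_norm: "norm (X :: complex^'a::finite^'a) \<le> real (CARD('a) * CARD('a)) * trace_norm X"
proof -
  have "norm X \<le> (\<Sum>i\<in>UNIV. \<Sum>j\<in>UNIV. cmod (X$i$j))"
    by (rule order_trans[OF norm_le_sumv sum_mono[OF norm_le_sumv]])
  also have "\<dots> \<le> (\<Sum>i\<in>(UNIV::'a set). \<Sum>j\<in>(UNIV::'a set). trace_norm X)"
    by (intro sum_mono entry_le_trace_norm)
  finally show ?thesis by simp
qed

lemma trace_norm_le_norm: "trace_norm (X :: complex^'a::finite^'a) \<le> real (CARD('a) * CARD('a)) * norm X"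
proof -
  have "trace_norm X \<le> (\<Sum>i\<in>UNIV. \<Sum>j\<in>UNIV. cmod (X$i$j))" by (rule trace_norm_le_sum)
  also have "\<dots> \<le> (\<Sum>i\<in>(UNIV::'a set). \<Sum>j\<in>(UNIV::'a set). norm X)"
    by (intro sum_mono order_trans[OF Finite_Cartesian_Product.norm_nth_le Finite_Cartesian_Product.norm_nth_le])
  finally show ?thesis by simp
qed



lemma tpow_nth: "tpow U $ a $ b = (\<Prod>k\<in>UNIV. U $ a k $ b k)"
  by (simp add: tpow_def)

lemma tpow_mult: "tpow (A ** B) = (tpow A ** tpow (B :: complex^'i::finite^'i) :: complex^('t::finite \<Rightarrow> 'i)^('t \<Rightarrow> 'i))"
proof (rule vec_eq_iff[THEN iffD2], intro allI, rule vec_eq_iff[THEN iffD2], intro allI)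
  fix a c :: "'t \<Rightarrow> 'i"
  have "tpow (A ** B) $ a $ c = (\<Prod>k\<in>UNIV. \<Sum>j\<in>UNIV. A $ a k $ j * B $ j $ c k)"
    by (simp add: tpow_nth mmult_nth)
  also have "\<dots> = (\<Sum>g\<in>PiE UNIV (\<lambda>_. UNIV). \<Prod>k\<in>UNIV. A $ a k $ g k * B $ g k $ c k)"
    by (rule prod_sum_PiE) auto
  also have "\<dots> = (\<Sum>g\<in>UNIV. (\<Prod>k\<in>UNIV. A $ a k $ g k) * (\<Prod>k\<in>UNIV. B $ g k $ c k))"
    by (simp add: prod.distrib)
  also have "\<dots> = (tpow A ** tpow B) $ a $ c"
    by (simp add: tpow_nth mmult_nth)
  finally show "tpow (A ** B) $ a $ c = (tpow A ** tpow B) $ a $ c" .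
qed

lemma tpow_adj: "tpow (adj A) = adj (tpow (A :: complex^'i::finite^'i) :: complex^('t::finite \<Rightarrow> 'i)^('t \<Rightarrow> 'i))"
  by (simp add: vec_eq_iff tpow_nth)

lemma tpow_mat1: "tpow (mat 1 :: complex^'i::finite^'i) = (mat 1 :: complex^('t::finite \<Rightarrow> 'i)^('t \<Rightarrow> 'i))"
proof (rule vec_eq_iff[THEN iffD2], intro allI, rule vec_eq_iff[THEN iffD2], intro allI)
  fix a b :: "'t \<Rightarrow> 'i"
  show "tpow (mat 1 :: complex^'i::finite^'i) $ a $ b = (mat 1 :: complex^('t::finite \<Rightarrow> 'i)^('t \<Rightarrow> 'i)) $ a $ b"
  proof (cases "a = b")
    case True then show ?thesis by (simp add: tpow_nth mat_def)
  next
    case False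
    then obtain k where "a k \<noteq> b k" by auto
    then have "(\<Prod>k\<in>UNIV. (mat 1 :: complex^'i::finite^'i) $ a k $ b k) = 0"
      by (intro prod_zero finite_UNIV bexI[of _ k]) (auto simp: mat_def)
    then show ?thesis using False by (simp add: tpow_nth mat_def)
  qed
qed

lemma unitary_tpow: assumes "unitary U"
  shows "unitary (tpow U :: complex^('t::finite \<Rightarrow> 'i::finite)^('t \<Rightarrow> 'i))"
  using assms unfolding unitary_def
  by (metis tpow_adj tpow_mult tpow_mat1)

definition lift :: "complex^'c::finite^'c \<Rightarrow> complex^('c \<times> 'd::finite)^('c \<times> 'd)" where
  "lift A = (\<chi> p r. A $ fst p $ fst r * (if snd p = snd r then 1 else 0))"

lemma sum_pair: "(\<Sum>q\<in>UNIV. f q) = (\<Sum>c\<in>UNIV. \<Sum>d\<in>UNIV. f (c, d))"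
  by (simp add: sum.cartesian_product)

lemma lift_mult_left: "(lift A ** Z) $ p $ q = (\<Sum>c\<in>UNIV. A $ fst p $ c * Z $ (c, snd p) $ q)"
proof -
  have "(lift A ** Z) $ p $ q = (\<Sum>c\<in>UNIV. \<Sum>d\<in>UNIV. if d = snd p then A $ fst p $ c * Z $ (c, d) $ q else 0)"
    unfolding mmult_nth by (subst sum_pair) (intro sum.cong refl, auto simp: lift_def)
  also have "\<dots> = (\<Sum>c\<in>UNIV. A $ fst p $ c * Z $ (c, snd p) $ q)"
    by simp
  finally show ?thesis .
qed

lemma lift_mult_right: "(M ** adj (lift A)) $ p $ r = (\<Sum>c\<in>UNIV. M $ p $ (c, snd r) * cnj (A $ fst r $ c))"
proof -
  have "(M ** adj (lift A)) $ p $ r = (\<Sum>c\<in>UNIV. \<Sum>d\<in>UNIV. if d = snd r then M $ p $ (c, d) * cnj (A $ fst r $ c) else 0)"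
    unfolding mmult_nth by (subst sum_pair) (intro sum.cong refl, auto simp: lift_def)
  also have "\<dots> = (\<Sum>c\<in>UNIV. M $ p $ (c, snd r) * cnj (A $ fst r $ c))"
    by simp
  finally show ?thesis .
qed

lemma lift_conj: "(lift A ** Z ** adj (lift A)) $ p $ r
   = (A ** (\<chi> a b. Z $ (a, snd p) $ (b, snd r)) ** adj A) $ fst p $ fst r"
  unfolding lift_mult_right lift_mult_left by (simp add: mmult_nth)

lemma lift_mult: "lift (A ** B) = (lift A ** lift B :: complex^('c::finite \<times> 'd::finite)^('c \<times> 'd))"
  by (simp add: vec_eq_iff lift_mult_left) (simp add: lift_def mmult_nth sum_distrib_right)

lemma lift_adj: "lift (adj A) = (adj (lift A) :: complex^('c::finite \<times> 'd::finite)^('c \<times> 'd))"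
  by (simp add: vec_eq_iff lift_def)

lemma lift_mat1: "lift (mat 1) = (mat 1 :: complex^('c::finite \<times> 'd::finite)^('c \<times> 'd))"
  by (simp add: vec_eq_iff lift_def mat_def prod_eq_iff)

lemma unitary_lift: assumes "unitary U"
  shows "unitary (lift U :: complex^('c::finite \<times> 'd::finite)^('c \<times> 'd))"
  using assms unfolding unitary_def
  by (metis lift_adj lift_mult lift_mat1)



lemma mm_add_r: "(A + B) ** C = A ** C + B ** (C :: complex^'a::finite^'b::finite)"
  by (simp add: vec_eq_iff mmult_nth sum.distrib distrib_right)

lemma mm_add_l: "C ** (A + B) = C ** A + C ** (B :: complex^'a::finite^'b::finite)"
  by (rule matrix_add_ldistrib)

lemma mm_scaleR_r: "A ** (r *\<^sub>R B) = r *\<^sub>R (A ** (B :: complex^'a::finite^'b::finite))"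
  by (simp add: vec_eq_iff mmult_nth scaleR_sum_right)

lemma mm_scaleR_l: "(r *\<^sub>R A) ** B = r *\<^sub>R (A ** (B :: complex^'a::finite^'b::finite))"
  by (simp add: vec_eq_iff mmult_nth scaleR_sum_right)

lemma conj_add: "U ** (A + B) ** adj U = U ** A ** adj U + U ** B ** adj (U :: complex^'a::finite^'b::finite)"
  by (simp add: mm_add_l mm_add_r)

lemma conj_scaleR: "U ** (r *\<^sub>R A) ** adj U = r *\<^sub>R (U ** A ** adj (U :: complex^'a::finite^'b::finite))"
  by (simp add: mm_scaleR_l mm_scaleR_r)

lemma linear_mtrace: "linear (\<lambda>M. mtrace (W ** (M :: complex^'a::finite^'a)))"
  by (rule linearI) (simp_all add: mm_add_l mm_scaleR_r mtrace_def sum.distrib scaleR_sum_right)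

lemma bl_mtrace: "bounded_linear (\<lambda>M. mtrace (W ** (M :: complex^'a::finite^'a)))"
  by (rule linear_conv_bounded_linear[THEN iffD1, OF linear_mtrace])

lemma linear_qf: "linear (\<lambda>M :: complex^'a::finite^'a. \<Sum>i\<in>UNIV. \<Sum>j\<in>UNIV. cnj (v $ i) * M $ i $ j * v $ j)"
  by (rule linearI) (simp_all add: sum.distrib distrib_left distrib_right scaleR_sum_right)

lemma bl_qf: "bounded_linear (\<lambda>M :: complex^'a::finite^'a. \<Sum>i\<in>UNIV. \<Sum>j\<in>UNIV. cnj (v $ i) * M $ i $ j * v $ j)"
  by (rule linear_conv_bounded_linear[THEN iffD1, OF linear_qf])

locale ruc = prob_space M for M :: "'x measure" +
  fixes f :: "'x \<Rightarrow> complex^'a::finite^'a"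
  assumes U: "AE x in M. unitary (f x)"
    and meas: "\<And>Z. (\<lambda>x. f x ** Z ** adj (f x)) \<in> borel_measurable M"
begin

lemma intg: "integrable M (\<lambda>x. f x ** Z ** adj (f x))"
proof (rule integrable_const_bound[where B="norm Z"])
  show "AE x in M. norm (f x ** Z ** adj (f x)) \<le> norm Z"
    using U by eventually_elim (simp add: norm_conj)
qed (rule meas)

lemma cnorm: "norm (\<integral>x. f x ** Z ** adj (f x) \<partial>M) \<le> norm Z"
proof -
  have "norm (\<integral>x. f x ** Z ** adj (f x) \<partial>M) \<le> (\<integral>x. norm (f x ** Z ** adj (f x)) \<partial>M)"
    by (rule integral_norm_bound)
  also have "\<dots> = (\<integral>x. norm Z \<partial>M)"
  proof (rule integral_cong_AE)
    show "(\<lambda>x. norm (f x ** Z ** adj (f x))) \<in> borel_measurable M"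
      by (rule measurable_compose[OF meas borel_measurable_norm])
    show "AE x in M. norm (f x ** Z ** adj (f x)) = norm Z"
      using U by eventually_elim (simp add: norm_conj)
  qed simp
  also have "\<dots> = norm Z" using prob_space by simp
  finally show ?thesis .
qed

lemma ctn: "trace_norm (\<integral>x. f x ** Z ** adj (f x) \<partial>M) \<le> trace_norm Z"
proof (rule trace_norm_least)
  fix W :: "complex^'a^'a" assume W: "unitary W"
  have "mtrace (W ** (\<integral>x. f x ** Z ** adj (f x) \<partial>M)) = (\<integral>x. mtrace (W ** (f x ** Z ** adj (f x))) \<partial>M)"
    by (rule integral_bounded_linear[OF bl_mtrace intg, symmetric])
  then have "cmod (mtrace (W ** (\<integral>x. f x ** Z ** adj (f x) \<partial>M))) \<le> (\<integral>x. cmod (mtrace (W ** (f x ** Z ** adj (f x)))) \<partial>M)"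
    by (simp only: integral_norm_bound)
  also have "\<dots> \<le> (\<integral>x. trace_norm Z \<partial>M)"
  proof (rule integral_mono_AE)
    show "integrable M (\<lambda>x. cmod (mtrace (W ** (f x ** Z ** adj (f x)))))"
      by (intro integrable_norm integrable_bounded_linear[OF bl_mtrace intg])
    show "AE x in M. cmod (mtrace (W ** (f x ** Z ** adj (f x)))) \<le> trace_norm Z"
      using U by eventually_elim (simp add: tn_conj W)
  qed simp
  also have "\<dots> = trace_norm Z" using prob_space by simp
  finally show "cmod (mtrace (W ** (\<integral>x. f x ** Z ** adj (f x) \<partial>M))) \<le> trace_norm Z" .
qed

lemma cpsd: assumes "psd Z" shows "psd (\<integral>x. f x ** Z ** adj (f x) \<partial>M)"
  unfolding psd_def
proof
  fix v :: "complex^'a"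
  let ?Q = "\<lambda>M :: complex^'a^'a. \<Sum>i\<in>UNIV. \<Sum>j\<in>UNIV. cnj (v $ i) * M $ i $ j * v $ j"
  have q: "?Q (\<integral>x. f x ** Z ** adj (f x) \<partial>M) = (\<integral>x. ?Q (f x ** Z ** adj (f x)) \<partial>M)"
    by (rule integral_bounded_linear[OF bl_qf intg, symmetric])
  have iq: "integrable M (\<lambda>x. ?Q (f x ** Z ** adj (f x)))"
    by (rule integrable_bounded_linear[OF bl_qf intg])
  have pt: "Im (?Q (f x ** Z ** adj (f x))) = 0 \<and> 0 \<le> Re (?Q (f x ** Z ** adj (f x)))" for x
    using psd_conj[OF assms, of "f x"] unfolding psd_def by blast
  have "Im (?Q (\<integral>x. f x ** Z ** adj (f x) \<partial>M)) = (\<integral>x. Im (?Q (f x ** Z ** adj (f x))) \<partial>M)"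
    unfolding q by (rule integral_bounded_linear[OF bounded_linear_Im iq, symmetric])
  also have "\<dots> = 0" using pt by simp
  finally have 1: "Im (?Q (\<integral>x. f x ** Z ** adj (f x) \<partial>M)) = 0" .
  have "Re (?Q (\<integral>x. f x ** Z ** adj (f x) \<partial>M)) = (\<integral>x. Re (?Q (f x ** Z ** adj (f x))) \<partial>M)"
    unfolding q by (rule integral_bounded_linear[OF bounded_linear_Re iq, symmetric])
  also have "\<dots> \<ge> 0" using pt by (intro integral_nonneg_AE) simp
  finally show "Im (?Q (\<integral>x. f x ** Z ** adj (f x) \<partial>M)) = 0 \<and> 0 \<le> Re (?Q (\<integral>x. f x ** Z ** adj (f x) \<partial>M))"
    using 1 by simp
qed

lemma clin: "linear (\<lambda>Z. \<integral>x. f x ** Z ** adj (f x) \<partial>M)"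
  by (rule linearI) (simp_all add: conj_add conj_scaleR intg)

end



lemma gate_unitary: "gate_group S \<subseteq> unitary_group"
  by (auto simp: gate_group_def unitary_group_def)

lemma haar_basic:
  assumes "haar_on G \<rho>" "G \<subseteq> unitary_group"
  shows "prob_space \<rho>" "AE U in \<rho>. U \<in> G" "AE U in \<rho>. unitary U"
proof -
  show P: "prob_space \<rho>" using assms(1) by (simp add: haar_on_def)
  interpret prob_space \<rho> by (rule P)
  have e1: "emeasure \<rho> G = 1" using assms(1) by (simp add: haar_on_def)
  then have Gs: "G \<in> sets \<rho>" using emeasure_notin_sets by fastforce
  have "prob G = 1" using e1 by (simp add: emeasure_eq_measure)
  then show AG: "AE U in \<rho>. U \<in> G" using AE_in_set_eq_1[OF Gs] by simp
  show "AE U in \<rho>. unitary U" using AG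
    by eventually_elim (use assms(2) in \<open>auto simp: unitary_group_def\<close>)
qed

lemma cont_tconj: "continuous_on UNIV (\<lambda>U :: complex^'i::finite^'i.
    (tpow U :: complex^('t::finite \<Rightarrow> 'i)^('t \<Rightarrow> 'i)) ** Z ** adj (tpow U))"
  unfolding tpow_def matrix_matrix_mult_def adj_def
  by (intro continuous_intros)

lemma cont_ltconj: "continuous_on UNIV (\<lambda>U :: complex^'i::finite^'i.
    (lift (tpow U :: complex^('t::finite \<Rightarrow> 'i)^('t \<Rightarrow> 'i)) :: complex^(('t \<Rightarrow> 'i) \<times> ('t \<Rightarrow> 'i))^(('t \<Rightarrow> 'i) \<times> ('t \<Rightarrow> 'i)))
       ** Z ** adj (lift (tpow U)))"
  unfolding tpow_def matrix_matrix_mult_def adj_def lift_def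
  by (intro continuous_intros)

lemma cont_lmult: "continuous_on UNIV (\<lambda>U :: complex^'i::finite^'i. V ** U)"
  unfolding matrix_matrix_mult_def
  by (intro continuous_intros)

lemma meas_borel: assumes "sets \<rho> = sets borel" "continuous_on UNIV g"
  shows "g \<in> borel_measurable \<rho>"
  using borel_measurable_continuous_onI[OF assms(2)] measurable_cong_sets[OF assms(1) refl] by blast

lemma haar_ruc:
  assumes "haar_on G \<rho>" "G \<subseteq> unitary_group"
  shows "ruc \<rho> (tpow :: complex^'i::finite^'i \<Rightarrow> complex^('t::finite \<Rightarrow> 'i)^('t \<Rightarrow> 'i))"
proof -
  have s: "sets \<rho> = sets borel" using assms(1) by (simp add: haar_on_def)
  interpret prob_space \<rho> by (rule haar_basic(1)[OF assms])
  show ?thesis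
  proof
    show "AE x in \<rho>. unitary (tpow x :: complex^('t::finite \<Rightarrow> 'i)^('t \<Rightarrow> 'i))"
      using haar_basic(3)[OF assms] by eventually_elim (rule unitary_tpow)
    show "(\<lambda>x. (tpow x :: complex^('t::finite \<Rightarrow> 'i)^('t \<Rightarrow> 'i)) ** Z ** adj (tpow x)) \<in> borel_measurable \<rho>" for Z
      by (rule meas_borel[OF s cont_tconj])
  qed
qed

lemma haar_lruc:
  assumes "haar_on G \<rho>" "G \<subseteq> unitary_group"
  shows "ruc \<rho> (\<lambda>U. lift (tpow U :: complex^('t::finite \<Rightarrow> 'i::finite)^('t \<Rightarrow> 'i)) ::
     complex^(('t \<Rightarrow> 'i) \<times> ('t \<Rightarrow> 'i))^(('t \<Rightarrow> 'i) \<times> ('t \<Rightarrow> 'i)))"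
proof -
  have s: "sets \<rho> = sets borel" using assms(1) by (simp add: haar_on_def)
  interpret prob_space \<rho> by (rule haar_basic(1)[OF assms])
  show ?thesis
  proof
    show "AE x in \<rho>. unitary (lift (tpow x :: complex^('t::finite \<Rightarrow> 'i)^('t \<Rightarrow> 'i)) ::
     complex^(('t \<Rightarrow> 'i) \<times> ('t \<Rightarrow> 'i))^(('t \<Rightarrow> 'i) \<times> ('t \<Rightarrow> 'i)))"
      using haar_basic(3)[OF assms] by eventually_elim (intro unitary_lift unitary_tpow)
    show "(\<lambda>x. (lift (tpow x :: complex^('t::finite \<Rightarrow> 'i)^('t \<Rightarrow> 'i)) ::
     complex^(('t \<Rightarrow> 'i) \<times> ('t \<Rightarrow> 'i))^(('t \<Rightarrow> 'i) \<times> ('t \<Rightarrow> 'i))) ** Z ** adj (lift (tpow x))) \<in> borel_measurable \<rho>" for Z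
      by (rule meas_borel[OF s cont_ltconj])
  qed
qed

lemma moment_eq: "moment \<nu> = (\<lambda>Z. \<integral>U. tpow U ** Z ** adj (tpow U) \<partial>\<nu>)"
  by (rule ext) (simp add: moment_def)

lemma bl_entry: "bounded_linear (\<lambda>M :: complex^'a::finite^'b::finite. M $ i $ j)"
  by (rule linear_conv_bounded_linear[THEN iffD1]) (rule linearI, simp_all)

lemma tensor_moment:
  assumes "haar_on G \<rho>" "G \<subseteq> unitary_group"
  shows "tensor_id (moment \<rho> :: complex^('t::finite \<Rightarrow> 'i::finite)^('t \<Rightarrow> 'i) \<Rightarrow> _) Y =
     (\<integral>U. lift (tpow U :: complex^('t \<Rightarrow> 'i)^('t \<Rightarrow> 'i)) ** Y ** adj (lift (tpow U)) \<partial>\<rho>)"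
proof (rule vec_eq_iff[THEN iffD2], intro allI, rule vec_eq_iff[THEN iffD2], intro allI)
  interpret R: ruc \<rho> "tpow :: complex^'i::finite^'i \<Rightarrow> complex^('t::finite \<Rightarrow> 'i)^('t \<Rightarrow> 'i)"
    by (rule haar_ruc[OF assms])
  interpret L: ruc \<rho> "\<lambda>U. lift (tpow U :: complex^('t::finite \<Rightarrow> 'i::finite)^('t \<Rightarrow> 'i)) ::
     complex^(('t \<Rightarrow> 'i) \<times> ('t \<Rightarrow> 'i))^(('t \<Rightarrow> 'i) \<times> ('t \<Rightarrow> 'i))"
    by (rule haar_lruc[OF assms])
  fix p r :: "('t \<Rightarrow> 'i) \<times> ('t \<Rightarrow> 'i)"
  let ?S = "\<chi> a b. Y $ (a, snd p) $ (b, snd r)"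
  have "tensor_id (moment \<rho>) Y $ p $ r = (\<integral>U. tpow U ** ?S ** adj (tpow U) \<partial>\<rho>) $ fst p $ fst r"
    by (simp add: tensor_id_def moment_def)
  also have "\<dots> = (\<integral>U. (tpow U ** ?S ** adj (tpow U)) $ fst p $ fst r \<partial>\<rho>)"
    by (rule integral_bounded_linear[OF bl_entry R.intg, symmetric])
  also have "\<dots> = (\<integral>U. (lift (tpow U :: complex^('t \<Rightarrow> 'i)^('t \<Rightarrow> 'i)) ** Y ** adj (lift (tpow U))) $ p $ r \<partial>\<rho>)"
    by (simp add: lift_conj)
  also have "\<dots> = (\<integral>U. lift (tpow U :: complex^('t \<Rightarrow> 'i)^('t \<Rightarrow> 'i)) ** Y ** adj (lift (tpow U)) \<partial>\<rho>) $ p $ r"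
    by (rule integral_bounded_linear[OF bl_entry L.intg])
  finally show "tensor_id (moment \<rho>) Y $ p $ r = (\<integral>U. lift (tpow U :: complex^('t \<Rightarrow> 'i)^('t \<Rightarrow> 'i)) ** Y ** adj (lift (tpow U)) \<partial>\<rho>) $ p $ r" .
qed



lemma bl_conj: "bounded_linear (\<lambda>M. A ** M ** adj (A :: complex^'a::finite^'a))"
  by (rule linear_conv_bounded_linear[THEN iffD1]) (rule linearI, simp_all add: conj_add conj_scaleR)

lemma haar_invariant:
  assumes hH: "haar_on unitary_group \<mu>H" and hG: "haar_on G \<nu>" "G \<subseteq> unitary_group"
  shows "moment \<nu> (moment \<mu>H X) = moment \<mu>H (X :: complex^('t::finite \<Rightarrow> 'i::finite)^('t \<Rightarrow> 'i))"
proof -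
  interpret H: ruc \<mu>H "tpow :: complex^'i^'i \<Rightarrow> complex^('t \<Rightarrow> 'i)^('t \<Rightarrow> 'i)"
    by (rule haar_ruc[OF hH subset_refl])
  interpret N: ruc \<nu> "tpow :: complex^'i^'i \<Rightarrow> complex^('t \<Rightarrow> 'i)^('t \<Rightarrow> 'i)"
    by (rule haar_ruc[OF hG])
  have sH: "sets \<mu>H = sets borel" using hH by (simp add: haar_on_def)
  have invH: "distr \<mu>H borel (\<lambda>U. V ** U) = \<mu>H" if "V \<in> unitary_group" for V
    using hH that by (simp add: haar_on_def)
  define h where "h W = (tpow W :: complex^('t \<Rightarrow> 'i)^('t \<Rightarrow> 'i)) ** X ** adj (tpow W)" for W :: "complex^'i^'i"
  have hm: "h \<in> borel_measurable borel"
    unfolding h_def by (rule borel_measurable_continuous_onI[OF cont_tconj])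
  have mH: "moment \<mu>H X = (\<integral>U. h U \<partial>\<mu>H)" by (simp add: moment_def h_def)
  have step: "tpow V ** moment \<mu>H X ** adj (tpow V) = moment \<mu>H X" if V: "V \<in> unitary_group" for V
  proof -
    have "tpow V ** moment \<mu>H X ** adj (tpow V) = (\<integral>U. tpow V ** h U ** adj (tpow V) \<partial>\<mu>H)"
      unfolding mH h_def by (rule integral_bounded_linear[OF bl_conj H.intg, symmetric])
    also have "\<dots> = (\<integral>U. h (V ** U) \<partial>\<mu>H)"
      by (rule Bochner_Integration.integral_cong[OF refl]) (simp add: h_def tpow_mult adj_mult matrix_mul_assoc)
    also have "\<dots> = integral\<^sup>L (distr \<mu>H borel (\<lambda>U. V ** U)) h"
      by (rule integral_distr[symmetric, OF meas_borel[OF sH cont_lmult] hm])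
    also have "\<dots> = (\<integral>U. h U \<partial>\<mu>H)" using invH[OF V] by simp
    finally show ?thesis using mH by simp
  qed
  have "moment \<nu> (moment \<mu>H X) = (\<integral>V. tpow V ** moment \<mu>H X ** adj (tpow V) \<partial>\<nu>)"
    by (simp add: moment_def[of \<nu>])
  also have "\<dots> = (\<integral>V. moment \<mu>H X \<partial>\<nu>)"
  proof (rule integral_cong_AE)
    show "AE V in \<nu>. tpow V ** moment \<mu>H X ** adj (tpow V) = moment \<mu>H X"
      using haar_basic(2)[OF hG] by eventually_elim (use hG(2) step in blast)
  qed (simp_all add: N.meas)
  also have "\<dots> = moment \<mu>H X" using N.prob_space by simp
  finally show ?thesis .
qed

lemma circuit_snoc: "circuit_moment (xs @ [\<nu>]) = moment \<nu> \<circ> circuit_moment xs"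
  by (induction xs) auto

lemma circuit_linear:
  "(\<And>\<rho>. \<rho> \<in> set xs \<Longrightarrow> linear (moment \<rho> :: complex^('t::finite \<Rightarrow> 'i::finite)^('t \<Rightarrow> 'i) \<Rightarrow> _))
   \<Longrightarrow> linear (circuit_moment xs :: complex^('t::finite \<Rightarrow> 'i::finite)^('t \<Rightarrow> 'i) \<Rightarrow> _)"
proof (induction xs)
  case Nil
  have "linear (\<lambda>x :: complex^('t \<Rightarrow> 'i)^('t \<Rightarrow> 'i). x)" by (rule linearI) simp_all
  then show ?case by (simp add: id_def)
next
  case (Cons a xs)
  have 1: "linear (moment a :: complex^('t \<Rightarrow> 'i)^('t \<Rightarrow> 'i) \<Rightarrow> _)" using Cons.prems by simp
  have 2: "linear (circuit_moment xs :: complex^('t \<Rightarrow> 'i)^('t \<Rightarrow> 'i) \<Rightarrow> _)" using Cons by simp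
  show ?case unfolding circuit_moment.simps by (rule linear_compose[OF 1 2])
qed

lemma haar_linear:
  assumes "haar_on G \<rho>" "G \<subseteq> unitary_group"
  shows "linear (moment \<rho> :: complex^('t::finite \<Rightarrow> 'i::finite)^('t \<Rightarrow> 'i) \<Rightarrow> _)"
proof -
  interpret R: ruc \<rho> "tpow :: complex^'i^'i \<Rightarrow> complex^('t \<Rightarrow> 'i)^('t \<Rightarrow> 'i)"
    by (rule haar_ruc[OF assms])
  show ?thesis unfolding moment_eq by (rule R.clin)
qed

lemma tensor_id_comp: "tensor_id (F \<circ> G) Y = tensor_id F (tensor_id G Y)"
proof -
  have sl: "(\<chi> a b. tensor_id G Y $ (a, c) $ (b, d)) = G (\<chi> a b. Y $ (a, c) $ (b, d))" for c d
    by (simp add: tensor_id_def vec_eq_iff)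
  show ?thesis
    unfolding tensor_id_def[of "F \<circ> G"] tensor_id_def[of F] sl by simp
qed

lemma tensor_linear: assumes "linear L" shows "linear (tensor_id L)"
proof (rule linearI)
  fix x y :: "complex^('a::finite \<times> 'a)^('a \<times> 'a)" and r :: real
  have sl: "(\<chi> a b. x $ (a, c) $ (b, d) + y $ (a, c) $ (b, d)) = (\<chi> a b. x $ (a,c) $ (b,d)) + (\<chi> a b. y $ (a,c) $ (b,d))" for c d
    by (simp add: vec_eq_iff)
  show "tensor_id L (x + y) = tensor_id L x + tensor_id L y"
    by (simp add: tensor_id_def vec_eq_iff sl linear_add[OF assms])
  have sl2: "(\<chi> a b. r *\<^sub>R (x $ (a, c) $ (b, d))) = r *\<^sub>R (\<chi> a b. x $ (a,c) $ (b,d))" for c d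
    by (simp add: vec_eq_iff)
  show "tensor_id L (r *\<^sub>R x) = r *\<^sub>R tensor_id L x"
    by (simp add: tensor_id_def vec_eq_iff sl2 linear_scale[OF assms])
qed



theorem lemma3:
  fixes gates :: "('n::finite set \<times> (complex^('n \<Rightarrow> 'q::finite)^('n \<Rightarrow> 'q)) measure) list"
    and S :: "'n set"
    and \<nu> \<mu>H :: "(complex^('n \<Rightarrow> 'q)^('n \<Rightarrow> 'q)) measure"
    and \<Phi> \<Phi>' \<Phi>H :: "complex^('t::finite \<Rightarrow> 'n \<Rightarrow> 'q)^('t \<Rightarrow> 'n \<Rightarrow> 'q) \<Rightarrow>
                      complex^('t \<Rightarrow> 'n \<Rightarrow> 'q)^('t \<Rightarrow> 'n \<Rightarrow> 'q)"
  assumes gates_haar: "\<forall>(T, \<rho>) \<in> set gates. haar_on (gate_group T) \<rho>"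
    and last_haar: "haar_on (gate_group S) \<nu>"
    and full_haar: "haar_on unitary_group \<mu>H"
    and \<Phi>H_def: "\<Phi>H = moment \<mu>H"
    and \<Phi>'_def: "\<Phi>' = circuit_moment (map snd gates)"
    and \<Phi>_def: "\<Phi> = circuit_moment (map snd (gates @ [(S, \<nu>)]))"
  shows "largest_singular_value (\<lambda>X. \<Phi> X - \<Phi>H X) \<le> largest_singular_value (\<lambda>X. \<Phi>' X - \<Phi>H X)
       \<and> diamond_norm (\<lambda>X. \<Phi> X - \<Phi>H X) \<le> diamond_norm (\<lambda>X. \<Phi>' X - \<Phi>H X)
       \<and> eps_M \<Phi> \<Phi>H \<le> eps_M \<Phi>' \<Phi>H"
proof -
  let ?\<Psi> = "moment \<nu> :: complex^('t \<Rightarrow> 'n \<Rightarrow> 'q)^('t \<Rightarrow> 'n \<Rightarrow> 'q) \<Rightarrow> _"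
  have GS: "gate_group S \<subseteq> unitary_group" by (rule gate_unitary)
  interpret N: ruc \<nu> "tpow :: complex^('n \<Rightarrow> 'q)^('n \<Rightarrow> 'q) \<Rightarrow> complex^('t \<Rightarrow> 'n \<Rightarrow> 'q)^('t \<Rightarrow> 'n \<Rightarrow> 'q)"
    by (rule haar_ruc[OF last_haar GS])
  interpret NL: ruc \<nu> "\<lambda>U. lift (tpow U :: complex^('t \<Rightarrow> 'n \<Rightarrow> 'q)^('t \<Rightarrow> 'n \<Rightarrow> 'q)) ::
     complex^(('t \<Rightarrow> 'n \<Rightarrow> 'q) \<times> ('t \<Rightarrow> 'n \<Rightarrow> 'q))^(('t \<Rightarrow> 'n \<Rightarrow> 'q) \<times> ('t \<Rightarrow> 'n \<Rightarrow> 'q))"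
    by (rule haar_lruc[OF last_haar GS])
  have linPsi: "linear ?\<Psi>" by (rule haar_linear[OF last_haar GS])
  have linH: "linear \<Phi>H" unfolding \<Phi>H_def by (rule haar_linear[OF full_haar subset_refl])
  have linP': "linear \<Phi>'" unfolding \<Phi>'_def
  proof (rule circuit_linear)
    fix \<rho> assume "\<rho> \<in> set (map snd gates)"
    then obtain T where "(T, \<rho>) \<in> set gates" by auto
    then have "haar_on (gate_group T) \<rho>" using gates_haar by auto
    then show "linear (moment \<rho> :: complex^('t \<Rightarrow> 'n \<Rightarrow> 'q)^('t \<Rightarrow> 'n \<Rightarrow> 'q) \<Rightarrow> _)"
      by (rule haar_linear[OF _ gate_unitary])
  qed
  have PhiPsi: "\<Phi> = ?\<Psi> \<circ> \<Phi>'" unfolding \<Phi>_def \<Phi>'_def by (simp add: circuit_snoc)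
  have inv: "?\<Psi> (\<Phi>H X) = \<Phi>H X" for X
    unfolding \<Phi>H_def by (rule haar_invariant[OF full_haar last_haar GS])
  let ?L = "\<lambda>X. \<Phi>' X - \<Phi>H X"
  have keyL: "(\<lambda>X. \<Phi> X - \<Phi>H X) = ?\<Psi> \<circ> ?L"
    by (rule ext) (simp add: PhiPsi linear_diff[OF linPsi] inv)
  have linL: "linear ?L" by (rule linear_compose_sub[OF linP' linH])
  have blL: "bounded_linear ?L" using linL linear_conv_bounded_linear by blast
  have blPsi: "bounded_linear ?\<Psi>" using linPsi linear_conv_bounded_linear by blast
  have normPsi: "norm (?\<Psi> Z) \<le> norm Z" for Z
    unfolding moment_def by (rule N.cnorm)
  have tnPsi: "trace_norm (tensor_id ?\<Psi> Z) \<le> trace_norm Z" for Z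
    unfolding tensor_moment[OF last_haar GS] by (rule NL.ctn)
  have psdPsi: "psd Z \<Longrightarrow> psd (tensor_id ?\<Psi> Z)" for Z
    unfolding tensor_moment[OF last_haar GS] by (rule NL.cpsd)
  have P1: "largest_singular_value (\<lambda>X. \<Phi> X - \<Phi>H X) \<le> largest_singular_value ?L"
  proof -
    have "onorm ?\<Psi> \<le> 1" by (rule onorm_bound) (simp_all add: normPsi)
    then have "onorm ?\<Psi> * onorm ?L \<le> 1 * onorm ?L"
      by (intro mult_right_mono onorm_pos_le[OF blL])
    then show ?thesis unfolding largest_singular_value_def keyL
      using onorm_compose[OF blPsi blL] by simp
  qed
  have P2: "diamond_norm (\<lambda>X. \<Phi> X - \<Phi>H X) \<le> diamond_norm ?L"
  proof -
    have blT: "bounded_linear (tensor_id ?L)"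
      using tensor_linear[OF linL] linear_conv_bounded_linear by blast
    obtain K where K: "\<And>x. norm (tensor_id ?L x) \<le> norm x * K" "K > 0"
      using bounded_linear.pos_bounded[OF blT] by blast
    define c where "c = real (CARD('t \<Rightarrow> 'n \<Rightarrow> 'q) * CARD('t \<Rightarrow> 'n \<Rightarrow> 'q))"
    define c2 where "c2 = real (CARD(('t \<Rightarrow> 'n \<Rightarrow> 'q) \<times> ('t \<Rightarrow> 'n \<Rightarrow> 'q)) * CARD(('t \<Rightarrow> 'n \<Rightarrow> 'q) \<times> ('t \<Rightarrow> 'n \<Rightarrow> 'q)))"
    have c2: "c2 \<ge> 0" by (simp add: c2_def)
    have bdd: "bdd_above {trace_norm (tensor_id ?L Y) | Y. trace_norm Y \<le> 1}"
    proof (rule bdd_aboveI)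
      fix x assume "x \<in> {trace_norm (tensor_id ?L Y) | Y. trace_norm Y \<le> 1}"
      then obtain Y where x: "x = trace_norm (tensor_id ?L Y)" and Y: "trace_norm Y \<le> 1" by blast
      have "x \<le> c2 * norm (tensor_id ?L Y)" unfolding x c2_def by (rule trace_norm_le_norm)
      also have "\<dots> \<le> c2 * (norm Y * K)" by (intro mult_left_mono K(1) c2)
      also have "\<dots> \<le> c2 * ((c2 * trace_norm Y) * K)"
        using norm_le_trace_norm[of Y] K(2) c2 unfolding c2_def by (intro mult_left_mono mult_right_mono) auto
      also have "\<dots> \<le> c2 * ((c2 * 1) * K)"
        using Y K(2) c2 by (intro mult_left_mono mult_right_mono) auto
      finally show "x \<le> c2 * (c2 * 1 * K)" .
    qed
    have ne: "{trace_norm (tensor_id (?\<Psi> \<circ> ?L) Y) | Y. trace_norm Y \<le> 1} \<noteq> {}"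
    proof -
      have "trace_norm (0 :: complex^(('t \<Rightarrow> 'n \<Rightarrow> 'q) \<times> ('t \<Rightarrow> 'n \<Rightarrow> 'q))^(('t \<Rightarrow> 'n \<Rightarrow> 'q) \<times> ('t \<Rightarrow> 'n \<Rightarrow> 'q))) \<le> 1"
        using trace_norm_le_sum[of "0 :: complex^(('t \<Rightarrow> 'n \<Rightarrow> 'q) \<times> ('t \<Rightarrow> 'n \<Rightarrow> 'q))^(('t \<Rightarrow> 'n \<Rightarrow> 'q) \<times> ('t \<Rightarrow> 'n \<Rightarrow> 'q))"] by simp
      then show ?thesis by blast
    qed
    show ?thesis unfolding diamond_norm_def keyL
    proof (rule cSup_mono[OF ne bdd])
      fix b assume "b \<in> {trace_norm (tensor_id (?\<Psi> \<circ> ?L) Y) | Y. trace_norm Y \<le> 1}"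
      then obtain Y where b: "b = trace_norm (tensor_id (?\<Psi> \<circ> ?L) Y)" and Y: "trace_norm Y \<le> 1" by blast
      have "b \<le> trace_norm (tensor_id ?L Y)" unfolding b tensor_id_comp by (rule tnPsi)
      then show "\<exists>a\<in>{trace_norm (tensor_id ?L Y) | Y. trace_norm Y \<le> 1}. b \<le> a" using Y by blast
    qed
  qed
  have cpPsi: "completely_positive (?\<Psi> \<circ> M)" if "completely_positive M" for M
    using that unfolding completely_positive_def positive_map_def tensor_id_comp
    by (simp add: psdPsi)
  have P3: "eps_M \<Phi> \<Phi>H \<le> eps_M \<Phi>' \<Phi>H"
    unfolding eps_M_def
  proof (rule Inf_superset_mono, rule image_mono, rule subsetI)
    fix \<epsilon> assume "\<epsilon> \<in> {\<epsilon>::real. completely_positive (\<lambda>X. \<epsilon> *\<^sub>R \<Phi>H X + (\<Phi>' X - \<Phi>H X)) \<and>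
      completely_positive (\<lambda>X. \<epsilon> *\<^sub>R \<Phi>H X - (\<Phi>' X - \<Phi>H X))}"
    then have c1: "completely_positive (\<lambda>X. \<epsilon> *\<^sub>R \<Phi>H X + (\<Phi>' X - \<Phi>H X))"
      and c2: "completely_positive (\<lambda>X. \<epsilon> *\<^sub>R \<Phi>H X - (\<Phi>' X - \<Phi>H X))" by auto
    have e1: "(\<lambda>X. \<epsilon> *\<^sub>R \<Phi>H X + (\<Phi> X - \<Phi>H X)) = ?\<Psi> \<circ> (\<lambda>X. \<epsilon> *\<^sub>R \<Phi>H X + (\<Phi>' X - \<Phi>H X))"
      by (rule ext) (simp add: PhiPsi linear_diff[OF linPsi] linear_add[OF linPsi] linear_scale[OF linPsi] inv)
    have e2: "(\<lambda>X. \<epsilon> *\<^sub>R \<Phi>H X - (\<Phi> X - \<Phi>H X)) = ?\<Psi> \<circ> (\<lambda>X. \<epsilon> *\<^sub>R \<Phi>H X - (\<Phi>' X - \<Phi>H X))"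
      by (rule ext) (simp add: PhiPsi linear_diff[OF linPsi] linear_scale[OF linPsi] inv)
    show "\<epsilon> \<in> {\<epsilon>::real. completely_positive (\<lambda>X. \<epsilon> *\<^sub>R \<Phi>H X + (\<Phi> X - \<Phi>H X)) \<and>
      completely_positive (\<lambda>X. \<epsilon> *\<^sub>R \<Phi>H X - (\<Phi> X - \<Phi>H X))}"
      unfolding mem_Collect_eq e1 e2 using cpPsi[OF c1] cpPsi[OF c2] by blast
  qed
  show ?thesis using P1 P2 P3 by simp
qed


end
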